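(* For every group $G$, let $\epsilon\colon\mathrm{Gr}(\mathrm{Pq}(G))\to G$ be the surjective group homomorphism with $\epsilon(\sigma(a))=a$ for all $a\in G$. Then the kernel of $\epsilon$ is contained in the center of $\mathrm{Gr}(\mathrm{Pq}(G))$; in particular $\mathrm{Gr}(\mathrm{Pq}(G))$ is a central extension of $G$ with abelian kernel.
   Context: For a group $G$, $\mathrm{Pq}(G)$ is the power quandle on the underlying set of $G$ with $a\rhd b=aba^{-1}$, $\pi^n(a)=a^n$ ($n\in\mathbb{Z}$), and unit the identity $e$. For a power quandle $P$ (a set with operation $\rhd$, maps $\pi^n$, unit $e$), $\mathrm{Gr}(P)$ is the group with generators $\sigma(a)$, $a\in P$, and relations $\sigma(a\rhd b)=\sigma(a)\sigma(b)\sigma(a)^{-1}$, $\sigma(\pi^n(a))=\sigma(a)^n$, $\sigma(e)=1$ for all $a,b\in P$, $n\in\mathbb{Z}$. Thus $\mathrm{Gr}(\mathrm{Pq}(G))$ has generators $\sigma(a)$, $a\in G$, with relations $\sigma(aba^{-1})=\sigma(a)\sigma(b)\sigma(a)^{-1}$, $\sigma(a^n)=\sigma(a)^n$, $\sigma(e)=1$. *)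

theory Defs
  imports "HOL-Algebra.Algebra"
begin

text \<open>Words in the generators sigma(a) of Gr(Pq(G)): a letter (a, True) stands for
  sigma(a), a letter (a, False) for sigma(a)^-1.\<close>

type_synonym 'a grword = "('a \<times> bool) list"

definition sig_pow :: "'a \<Rightarrow> int \<Rightarrow> 'a grword" where
  "sig_pow a n = replicate (nat \<bar>n\<bar>) (a, n \<ge> 0)"

inductive gr_eq :: "('a, 'm) monoid_scheme \<Rightarrow> 'a grword \<Rightarrow> 'a grword \<Rightarrow> bool"
  for G where
  refl: "gr_eq G xs xs"
| sym: "gr_eq G xs ys \<Longrightarrow> gr_eq G ys xs"
| trans: "gr_eq G xs ys \<Longrightarrow> gr_eq G ys zs \<Longrightarrow> gr_eq G xs zs"
| ctxt: "gr_eq G xs ys \<Longrightarrow> gr_eq G (us @ xs @ vs) (us @ ys @ vs)"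
| cancel: "gr_eq G [(a, b), (a, \<not> b)] []"
| conj: "a \<in> carrier G \<Longrightarrow> b \<in> carrier G \<Longrightarrow>
    gr_eq G [(a \<otimes>\<^bsub>G\<^esub> b \<otimes>\<^bsub>G\<^esub> inv\<^bsub>G\<^esub> a, True)] [(a, True), (b, True), (a, False)]"
| power: "a \<in> carrier G \<Longrightarrow> gr_eq G [(a [^]\<^bsub>G\<^esub> (n::int), True)] (sig_pow a n)"
| unit: "gr_eq G [(\<one>\<^bsub>G\<^esub>, True)] []"

definition gr_words :: "('a, 'm) monoid_scheme \<Rightarrow> 'a grword set" where
  "gr_words G = {xs. set (map fst xs) \<subseteq> carrier G}"

definition gr_class :: "('a, 'm) monoid_scheme \<Rightarrow> 'a grword \<Rightarrow> 'a grword set" where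
  "gr_class G xs = {ys \<in> gr_words G. gr_eq G xs ys}"

definition GrPq :: "('a, 'm) monoid_scheme \<Rightarrow> 'a grword set monoid" where
  "GrPq G = \<lparr> carrier = gr_class G ` gr_words G,
             monoid.mult = (\<lambda>A B. gr_class G ((SOME xs. xs \<in> A) @ (SOME ys. ys \<in> B))),
             one = gr_class G [] \<rparr>"

definition sigma :: "('a, 'm) monoid_scheme \<Rightarrow> 'a \<Rightarrow> 'a grword set" where
  "sigma G a = gr_class G [(a, True)]"

definition center :: "('a, 'm) monoid_scheme \<Rightarrow> 'a set" where
  "center H = {z \<in> carrier H. \<forall>x \<in> carrier H. z \<otimes>\<^bsub>H\<^esub> x = x \<otimes>\<^bsub>H\<^esub> z}"

end

theory Submission
  imports Defs
begin

definition lt :: "('a, 'm) monoid_scheme \<Rightarrow> 'a \<times> bool \<Rightarrow> 'a" where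
  "lt G x = (if fst x \<in> carrier G then (if snd x then fst x else inv\<^bsub>G\<^esub> (fst x)) else \<one>\<^bsub>G\<^esub>)"

definition phi :: "('a, 'm) monoid_scheme \<Rightarrow> 'a grword \<Rightarrow> 'a" where
  "phi G w = foldr (\<lambda>x acc. lt G x \<otimes>\<^bsub>G\<^esub> acc) w \<one>\<^bsub>G\<^esub>"

definition winv :: "'a grword \<Rightarrow> 'a grword" where
  "winv w = rev (map (\<lambda>(a,b). (a, \<not> b)) w)"

lemmas [trans] = gr_eq.trans

lemma winv_simps[simp]: "winv [] = []" "winv (x # w) = winv w @ [(fst x, \<not> snd x)]"
  "winv (w @ v) = winv v @ winv w" "winv (winv w) = w"
  by (auto simp: winv_def rev_map[symmetric] comp_def case_prod_beta)

lemma gr_eq_app: "gr_eq G xs xs' \<Longrightarrow> gr_eq G ys ys' \<Longrightarrow> gr_eq G (xs @ ys) (xs' @ ys')"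
proof -
  assume a: "gr_eq G xs xs'" "gr_eq G ys ys'"
  have "gr_eq G ([] @ xs @ ys) ([] @ xs' @ ys)" by (rule gr_eq.ctxt[OF a(1)])
  moreover have "gr_eq G (xs' @ ys @ []) (xs' @ ys' @ [])" by (rule gr_eq.ctxt[OF a(2)])
  ultimately show ?thesis using gr_eq.trans by fastforce
qed

lemma gr_eq_cancel': "gr_eq G [x, (fst x, \<not> snd x)] []"
  using gr_eq.cancel[of G "fst x" "snd x"] by simp

lemma gr_eq_winv: "gr_eq G (w @ winv w) []"
proof (induction w)
  case Nil then show ?case by (simp add: gr_eq.refl)
next
  case (Cons x w)
  have "gr_eq G ((x # w @ winv w) @ [(fst x, \<not> snd x)]) ([x] @ [] @ [(fst x, \<not> snd x)])"
    using gr_eq.ctxt[OF Cons.IH, of "[x]" "[(fst x, \<not> snd x)]"] by simp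
  then show ?case using gr_eq_cancel'[of G x] gr_eq.trans by fastforce
qed

lemma gr_eq_winv2: "gr_eq G (winv w @ w) []"
  using gr_eq_winv[of G "winv w"] by simp

lemma gr_eq_flip:
  assumes "gr_eq G [x] [y]"
  shows "gr_eq G [(fst x, \<not> snd x)] [(fst y, \<not> snd y)]"
proof -
  let ?x = "(fst x, \<not> snd x)" and ?y = "(fst y, \<not> snd y)"
  have "gr_eq G [?x] ([?x] @ [y, ?y] @ [])"
    using gr_eq.sym[OF gr_eq.ctxt[OF gr_eq_cancel'[of G y], of "[?x]" "[]"]] by simp
  also have "gr_eq G \<dots> ([?x] @ [x] @ [?y])"
    using gr_eq.ctxt[OF gr_eq.sym[OF assms], of "[?x]" "[?y]"] by simp
  also have "gr_eq G \<dots> ([] @ [] @ [?y])"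
    using gr_eq.ctxt[OF gr_eq_cancel'[of G ?x], of "[]" "[?y]"] by simp
  finally show ?thesis by simp
qed

context group
begin

lemma lt_closed[simp]: "lt G x \<in> carrier G"
  by (auto simp: lt_def)

lemma lt_T[simp]: "a \<in> carrier G \<Longrightarrow> lt G (a, True) = a"
  by (simp add: lt_def)

lemma lt_F[simp]: "a \<in> carrier G \<Longrightarrow> lt G (a, False) = inv a"
  by (simp add: lt_def)

lemma phi_closed[simp]: "phi G w \<in> carrier G"
  by (induction w) (auto simp: phi_def)

lemma phi_simps[simp]: "phi G [] = \<one>" "phi G (x # w) = lt G x \<otimes> phi G w"
  by (auto simp: phi_def)

lemma phi_append[simp]: "phi G (w @ v) = phi G w \<otimes> phi G v"
  by (induction w) (auto simp: m_assoc)

lemma phi_rep: "phi G (replicate k x) = lt G x [^] k"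
proof (induction k)
  case 0 then show ?case by simp
next
  case (Suc k) then show ?case by (simp only: replicate_Suc phi_simps nat_pow_Suc2[OF lt_closed])
qed

lemma phi_sig_pow: "a \<in> carrier G \<Longrightarrow> phi G (sig_pow a n) = a [^] n"
proof (cases "n \<ge> 0")
  case True
  assume a: "a \<in> carrier G"
  have s: "sig_pow a n = replicate (nat n) (a, True)" using True by (simp add: sig_pow_def)
  have "phi G (sig_pow a n) = a [^] (nat n)" unfolding s phi_rep using a by simp
  also have "\<dots> = a [^] (int (nat n))" by (simp only: int_pow_int)
  also have "int (nat n) = n" using True by simp
  finally show ?thesis .
next
  case False
  assume a: "a \<in> carrier G"
  have s: "sig_pow a n = replicate (nat (- n)) (a, False)" using False by (simp add: sig_pow_def)
  have "phi G (sig_pow a n) = inv a [^] (nat (- n))" unfolding s phi_rep using a by simp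
  also have "\<dots> = inv (a [^] (nat (- n)))" using a by (rule nat_pow_inv)
  also have "\<dots> = a [^] (- int (nat (- n)))" using a by (simp only: int_pow_neg_int)
  also have "- int (nat (- n)) = n" using False by simp
  finally show ?thesis .
qed

lemma phi_inv: "gr_eq G xs ys \<Longrightarrow> phi G xs = phi G ys"
proof (induction rule: gr_eq.induct)
  case (refl xs) then show ?case by simp
next
  case (sym xs ys) then show ?case by simp
next
  case (trans xs ys zs) then show ?case by simp
next
  case (ctxt xs ys us vs) then show ?case by simp
next
  case (cancel a b) then show ?case by (cases b) (simp_all add: lt_def)
next
  case (conj a b)
  then have "a \<otimes> b \<otimes> inv a \<in> carrier G" by simp
  with conj show ?case by (simp add: lt_def m_assoc del: inv_closed)
next
  case (power a n) then show ?case by (simp add: phi_sig_pow lt_def int_pow_closed)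
next
  case unit then show ?case by (simp add: lt_def)
qed

lemma L1: "a \<in> carrier G \<Longrightarrow> gr_eq G [(inv a, True)] [(a, False)]"
  using gr_eq.power[of a G "-1"] by (simp add: sig_pow_def int_pow_neg)

lemma L2: "a \<in> carrier G \<Longrightarrow> gr_eq G [(inv a, False)] [(a, True)]"
  using gr_eq_flip[OF L1] by simp

lemma conj_word:
  assumes "set (map fst w) \<subseteq> carrier G" "b \<in> carrier G"
  shows "gr_eq G (w @ [(b, True)] @ winv w) [(phi G w \<otimes> b \<otimes> inv (phi G w), True)]"
  using assms(1)
proof (induction w)
  case Nil then show ?case using assms(2) by (simp add: gr_eq.refl)
next
  case (Cons x w)
  obtain a c where x: "x = (a, c)" by force
  have a: "a \<in> carrier G" and ws: "set (map fst w) \<subseteq> carrier G" using Cons.prems x by auto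
  let ?c = "phi G w \<otimes> b \<otimes> inv (phi G w)"
  have cc: "?c \<in> carrier G" using assms(2) by simp
  have "gr_eq G ((x # w @ [(b, True)] @ winv w) @ [(a, \<not> c)]) ([x] @ [(?c, True)] @ [(a, \<not> c)])"
    using gr_eq.ctxt[OF Cons.IH[OF ws], of "[x]" "[(a, \<not> c)]"] by simp
  also have "gr_eq G \<dots> [(phi G (x # w) \<otimes> b \<otimes> inv (phi G (x # w)), True)]"
  proof (cases c)
    case True
    have p: "phi G (x # w) = a \<otimes> phi G w" using True a x by simp
    have e: "phi G (x # w) \<otimes> b \<otimes> inv (phi G (x # w)) = a \<otimes> ?c \<otimes> inv a"
      unfolding p using a assms(2) phi_closed[of w] by (simp only: inv_mult_group m_assoc m_closed inv_closed)
    show ?thesis unfolding e using gr_eq.sym[OF gr_eq.conj[OF a cc]] True x by simp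
  next
    case False
    have p: "phi G (x # w) = inv a \<otimes> phi G w" using False a x by simp
    have e: "phi G (x # w) \<otimes> b \<otimes> inv (phi G (x # w)) = inv a \<otimes> ?c \<otimes> inv (inv a)"
      unfolding p using a assms(2) phi_closed[of w] by (simp only: inv_mult_group m_assoc m_closed inv_closed)
    have "gr_eq G ([x] @ [(?c, True)] @ [(a, \<not> c)]) ([(inv a, True)] @ [(?c, True)] @ [(a, \<not> c)])"
      using gr_eq.ctxt[OF gr_eq.sym[OF L1[OF a]], of "[]" "[(?c, True)] @ [(a, \<not> c)]"] False x by simp
    also have "gr_eq G \<dots> (([(inv a, True)] @ [(?c, True)]) @ [(inv a, False)] @ [])"
      using gr_eq.ctxt[OF gr_eq.sym[OF L2[OF a]], of "[(inv a, True)] @ [(?c, True)]" "[]"] False by simp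
    also have "gr_eq G \<dots> [(inv a \<otimes> ?c \<otimes> inv (inv a), True)]"
      using gr_eq.sym[OF gr_eq.conj[OF inv_closed[OF a] cc]] by simp
    finally show ?thesis unfolding e .
  qed
  finally show ?case by (simp add: x)
qed

lemma kernel_word:
  assumes "set (map fst w) \<subseteq> carrier G" "phi G w = \<one>" "set (map fst v) \<subseteq> carrier G"
  shows "gr_eq G (w @ v @ winv w) v"
  using assms(3)
proof (induction v)
  case Nil then show ?case by (simp add: gr_eq_winv)
next
  case (Cons x v)
  obtain b c where x: "x = (b, c)" by force
  have b: "b \<in> carrier G" and vs: "set (map fst v) \<subseteq> carrier G" using Cons.prems x by auto
  have one: "gr_eq G (w @ [x] @ winv w) [x]"
  proof (cases c)
    case True then show ?thesis using conj_word[OF assms(1) b] assms(2) b x by simp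
  next
    case False
    have "gr_eq G (w @ [x] @ winv w) (w @ [(inv b, True)] @ winv w)"
      using gr_eq.ctxt[OF gr_eq.sym[OF L1[OF b]], of w "winv w"] False x by simp
    also have "gr_eq G \<dots> [(inv b, True)]"
      using conj_word[OF assms(1) inv_closed[OF b]] assms(2) b by simp
    also have "gr_eq G \<dots> [x]" using L1[OF b] False x by simp
    finally show ?thesis .
  qed
  have "gr_eq G (w @ (x # v) @ winv w) ((w @ [x]) @ [] @ (v @ winv w))" by (simp add: gr_eq.refl)
  also have "gr_eq G \<dots> ((w @ [x]) @ (winv w @ w) @ (v @ winv w))"
    using gr_eq.ctxt[OF gr_eq.sym[OF gr_eq_winv2]] by blast
  also have "gr_eq G \<dots> ((w @ [x] @ winv w) @ (w @ v @ winv w))" by (simp add: gr_eq.refl)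
  also have "gr_eq G \<dots> ([x] @ v)" by (rule gr_eq_app[OF one Cons.IH[OF vs]])
  finally show ?case by simp
qed

end

lemma class_self: "xs \<in> gr_words G \<Longrightarrow> xs \<in> gr_class G xs"
  by (simp add: gr_class_def gr_eq.refl)

lemma class_eq: "gr_eq G xs ys \<Longrightarrow> gr_class G xs = gr_class G ys"
  unfolding gr_class_def using gr_eq.trans gr_eq.sym by blast

lemma class_some:
  assumes "xs \<in> gr_words G"
  shows "gr_eq G xs (SOME z. z \<in> gr_class G xs) \<and> (SOME z. z \<in> gr_class G xs) \<in> gr_words G"
proof -
  have "(SOME z. z \<in> gr_class G xs) \<in> gr_class G xs" by (rule someI, rule class_self[OF assms])
  then show ?thesis by (simp add: gr_class_def)
qed

lemma words_app[simp]: "xs @ ys \<in> gr_words G \<longleftrightarrow> xs \<in> gr_words G \<and> ys \<in> gr_words G"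
  by (auto simp: gr_words_def)

lemma map_fst_winv: "map fst (winv xs) = rev (map fst xs)"
  by (induction xs) auto

lemma words_winv[simp]: "winv xs \<in> gr_words G \<longleftrightarrow> xs \<in> gr_words G"
  unfolding gr_words_def using map_fst_winv[of xs] by (metis mem_Collect_eq set_rev)

lemma class_mult:
  assumes "xs \<in> gr_words G" "ys \<in> gr_words G"
  shows "gr_class G xs \<otimes>\<^bsub>GrPq G\<^esub> gr_class G ys = gr_class G (xs @ ys)"
proof -
  have "gr_eq G (xs @ ys) ((SOME z. z \<in> gr_class G xs) @ (SOME z. z \<in> gr_class G ys))"
    using gr_eq_app class_some[OF assms(1)] class_some[OF assms(2)] by blast
  then show ?thesis unfolding GrPq_def using class_eq by fastforce
qed

lemma carrier_GrPq: "A \<in> carrier (GrPq G) \<longleftrightarrow> (\<exists>xs \<in> gr_words G. A = gr_class G xs)"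
  by (auto simp: GrPq_def)

lemma one_GrPq: "\<one>\<^bsub>GrPq G\<^esub> = gr_class G []"
  by (simp add: GrPq_def)

lemma group_GrPq: "group (GrPq G)"
proof (rule groupI)
  fix x y assume "x \<in> carrier (GrPq G)" "y \<in> carrier (GrPq G)"
  then show "x \<otimes>\<^bsub>GrPq G\<^esub> y \<in> carrier (GrPq G)"
    by (auto simp: carrier_GrPq class_mult)
next
  show "\<one>\<^bsub>GrPq G\<^esub> \<in> carrier (GrPq G)"
    unfolding carrier_GrPq one_GrPq by (rule bexI[of _ "[]"]) (auto simp: gr_words_def)
next
  fix x y z assume "x \<in> carrier (GrPq G)" "y \<in> carrier (GrPq G)" "z \<in> carrier (GrPq G)"
  then show "x \<otimes>\<^bsub>GrPq G\<^esub> y \<otimes>\<^bsub>GrPq G\<^esub> z = x \<otimes>\<^bsub>GrPq G\<^esub> (y \<otimes>\<^bsub>GrPq G\<^esub> z)"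
    by (auto simp: carrier_GrPq class_mult)
next
  fix x assume "x \<in> carrier (GrPq G)"
  then show "\<one>\<^bsub>GrPq G\<^esub> \<otimes>\<^bsub>GrPq G\<^esub> x = x"
    by (auto simp: carrier_GrPq class_mult one_GrPq gr_words_def)
next
  fix x assume "x \<in> carrier (GrPq G)"
  then obtain xs where xs: "xs \<in> gr_words G" "x = gr_class G xs" by (auto simp: carrier_GrPq)
  have "gr_class G (winv xs) \<otimes>\<^bsub>GrPq G\<^esub> x = \<one>\<^bsub>GrPq G\<^esub>"
    using xs class_mult[of "winv xs" G xs] class_eq[OF gr_eq_winv2[of G xs]] by (simp add: one_GrPq)
  moreover have "gr_class G (winv xs) \<in> carrier (GrPq G)" using xs by (auto simp: carrier_GrPq)
  ultimately show "\<exists>y\<in>carrier (GrPq G). y \<otimes>\<^bsub>GrPq G\<^esub> x = \<one>\<^bsub>GrPq G\<^esub>" by blast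
qed

theorem mainTheorem8:
  fixes G :: "('a, 'm) monoid_scheme"
  assumes "group G"
  shows "group (GrPq G)
    \<and> (\<exists>\<epsilon>. \<epsilon> \<in> hom (GrPq G) G \<and> \<epsilon> ` carrier (GrPq G) = carrier G
           \<and> (\<forall>a \<in> carrier G. \<epsilon> (sigma G a) = a))
    \<and> (\<forall>\<epsilon> \<in> hom (GrPq G) G. (\<forall>a \<in> carrier G. \<epsilon> (sigma G a) = a)
           \<longrightarrow> kernel (GrPq G) G \<epsilon> \<subseteq> center (GrPq G))"
proof (intro conjI)
  interpret G: group G by (rule assms)
  show "group (GrPq G)" by (rule group_GrPq)
  define e where "e = (\<lambda>A. phi G (SOME z. z \<in> A))"
  have e_class: "e (gr_class G xs) = phi G xs" if "xs \<in> gr_words G" for xs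
    using class_some[OF that] G.phi_inv unfolding e_def by metis
  have sig: "sigma G a \<in> carrier (GrPq G)" if "a \<in> carrier G" for a
    unfolding carrier_GrPq sigma_def by (rule bexI[of _ "[(a, True)]"]) (auto simp: gr_words_def that)
  have hom: "e \<in> hom (GrPq G) G"
    unfolding hom_def by (auto simp: carrier_GrPq class_mult e_class)
  have es: "\<forall>a \<in> carrier G. e (sigma G a) = a"
    by (auto simp: sigma_def e_class gr_words_def lt_def)
  have "e ` carrier (GrPq G) = carrier G"
  proof
    show "e ` carrier (GrPq G) \<subseteq> carrier G" using hom by (auto simp: hom_def)
    show "carrier G \<subseteq> e ` carrier (GrPq G)" using es sig by (metis image_eqI subsetI)
  qed
  then show "\<exists>\<epsilon>. \<epsilon> \<in> hom (GrPq G) G \<and> \<epsilon> ` carrier (GrPq G) = carrier G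
           \<and> (\<forall>a \<in> carrier G. \<epsilon> (sigma G a) = a)" using hom es by blast
  show "\<forall>\<epsilon> \<in> hom (GrPq G) G. (\<forall>a \<in> carrier G. \<epsilon> (sigma G a) = a)
           \<longrightarrow> kernel (GrPq G) G \<epsilon> \<subseteq> center (GrPq G)"
  proof (intro ballI impI subsetI)
    fix f z assume f: "f \<in> hom (GrPq G) G" and fs: "\<forall>a \<in> carrier G. f (sigma G a) = a"
      and z: "z \<in> kernel (GrPq G) G f"
    have fw: "f (gr_class G w) = phi G w" if "w \<in> gr_words G" for w
      using that
    proof (induction w)
      case Nil
      have "f (gr_class G []) = f (sigma G \<one>\<^bsub>G\<^esub>)"
        unfolding sigma_def using class_eq[OF gr_eq.unit[of G]] by simp
      then show ?case using fs by simp
    next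
      case (Cons x w)
      obtain a c where x: "x = (a, c)" by force
      have a: "a \<in> carrier G" and ws: "w \<in> gr_words G" using Cons.prems x by (auto simp: gr_words_def)
      have "gr_class G [x] = sigma G (lt G x)"
      proof (cases c)
        case True then show ?thesis using x a by (simp add: sigma_def lt_def)
      next
        case False then show ?thesis using x a G.L1[OF a] class_eq by (metis lt_def sigma_def fst_conv snd_conv)
      qed
      moreover have "gr_class G (x # w) = gr_class G [x] \<otimes>\<^bsub>GrPq G\<^esub> gr_class G w"
        using class_mult[of "[x]" G w] ws a x by (simp add: gr_words_def)
      moreover have "gr_class G w \<in> carrier (GrPq G)" using ws by (auto simp: carrier_GrPq)
      moreover have "sigma G (lt G x) \<in> carrier (GrPq G)" using a x by (intro sig) (auto simp: lt_def)
      ultimately have "f (gr_class G (x # w)) = f (sigma G (lt G x)) \<otimes>\<^bsub>G\<^esub> f (gr_class G w)"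
        using f by (simp add: hom_mult)
      then show ?case using fs Cons.IH[OF ws] by simp
    qed
    obtain w where w: "w \<in> gr_words G" "z = gr_class G w" and fz: "f z = \<one>\<^bsub>G\<^esub>"
      using z by (auto simp: kernel_def carrier_GrPq)
    have pw: "phi G w = \<one>\<^bsub>G\<^esub>" using fz fw w by simp
    show "z \<in> center (GrPq G)"
      unfolding center_def
    proof (intro CollectI conjI ballI)
      show "z \<in> carrier (GrPq G)" using w by (auto simp: carrier_GrPq)
      fix y assume "y \<in> carrier (GrPq G)"
      then obtain v where v: "v \<in> gr_words G" "y = gr_class G v" by (auto simp: carrier_GrPq)
      have "gr_eq G (w @ v) ((w @ v @ winv w) @ w)"
        using gr_eq_app[OF gr_eq.refl gr_eq.sym[OF gr_eq_winv2[of G w]], of "w @ v"] by simp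
      also have "gr_eq G \<dots> (v @ w)"
        using gr_eq_app[OF G.kernel_word[of w v] gr_eq.refl] w v pw by (simp add: gr_words_def)
      finally show "z \<otimes>\<^bsub>GrPq G\<^esub> y = y \<otimes>\<^bsub>GrPq G\<^esub> z"
        using w v class_mult class_eq by metis
    qed
  qed
qed

end
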